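(* Let $\Phi=\{\varphi_n\}_{n=1}^N\subseteq\mathbb{R}^M$ with each $\varphi_n$ nonzero, and let $\mathcal{A}\colon\mathbb{R}^M/\{\pm1\}\to\mathbb{R}^N$ be defined by $(\mathcal{A}(x))(n):=|\langle x,\varphi_n\rangle|^2$. Then $\mathcal{A}$ is almost injective if and only if $\Phi$ spans $\mathbb{R}^M$ and $\operatorname{rank}\Phi_S+\operatorname{rank}\Phi_{S^\mathrm{c}}>M$ for each nonempty proper subset $S\subseteq\{1,\ldots,N\}$.
   Context: For $S\subseteq\{1,\ldots,N\}$, $\Phi_S$ denotes the $M\times|S|$ matrix with columns $\{\varphi_n\}_{n\in S}$ and $S^\mathrm{c}$ is the complement of $S$ in $\{1,\ldots,N\}$. The map $\mathcal{A}$ is called almost injective if $\mathcal{A}^{-1}(\mathcal{A}(x))=\{\pm x\}$ for (Lebesgue) almost every $x\in\mathbb{R}^M$. *)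

theory Defs
  imports "HOL-Analysis.Analysis"
begin

definition intensity_map :: "('n \<Rightarrow> real ^ 'm) \<Rightarrow> real ^ 'm \<Rightarrow> ('n \<Rightarrow> real)" where
  "intensity_map \<Phi> x = (\<lambda>n. \<bar>x \<bullet> \<Phi> n\<bar>\<^sup>2)"

definition almost_injective :: "('n \<Rightarrow> real ^ 'm) \<Rightarrow> bool" where
  "almost_injective \<Phi> \<longleftrightarrow>
     (AE x in lebesgue. {y. intensity_map \<Phi> y = intensity_map \<Phi> x} = {x, -x})"

text \<open>rank of the matrix Phi_S with columns phi_n, n in S = dimension of its column space.\<close>
definition rank_sub :: "('n \<Rightarrow> real ^ 'm) \<Rightarrow> 'n set \<Rightarrow> nat" where
  "rank_sub \<Phi> S = dim (span (\<Phi> ` S))"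

end

theory Submission
  imports Defs
begin

definition Perp :: "('n \<Rightarrow> real ^ 'm) \<Rightarrow> 'n set \<Rightarrow> (real ^ 'm) set" where
  "Perp \<Phi> S = {y. \<forall>n\<in>S. \<Phi> n \<bullet> y = 0}"

lemma subspace_Perp: "subspace (Perp \<Phi> S)"
  unfolding Perp_def subspace_def by (auto simp: inner_add_right)

lemma Perp_eq: "Perp \<Phi> S = {y \<in> UNIV. \<forall>x \<in> span (\<Phi> ` S). orthogonal x y}"
proof -
  have "(\<forall>x \<in> span (\<Phi> ` S). orthogonal x y)" if "y \<in> Perp \<Phi> S" for y
  proof
    fix x assume "x \<in> span (\<Phi> ` S)"
    then have "orthogonal y x"
      by (rule orthogonal_to_span) (use that in \<open>auto simp: Perp_def orthogonal_def inner_commute\<close>)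
    then show "orthogonal x y" by (simp add: orthogonal_commute)
  qed
  moreover have "y \<in> Perp \<Phi> S" if "\<forall>x \<in> span (\<Phi> ` S). orthogonal x y" for y
  proof -
    have "orthogonal (\<Phi> n) y" if "n \<in> S" for n
      using \<open>\<forall>x \<in> span (\<Phi> ` S). orthogonal x y\<close> span_base[of "\<Phi> n" "\<Phi> ` S"] that by blast
    then show ?thesis by (simp add: Perp_def orthogonal_def)
  qed
  ultimately show ?thesis by blast
qed

lemma dim_Perp:
  fixes \<Phi> :: "'n \<Rightarrow> real ^ 'm::finite"
  shows "dim (Perp \<Phi> S) + rank_sub \<Phi> S = CARD('m)"
proof -
  have "dim {y \<in> UNIV. \<forall>x \<in> span (\<Phi> ` S). orthogonal x y} + dim (span (\<Phi> ` S)) = dim (UNIV :: (real^'m) set)"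
    by (rule dim_subspace_orthogonal_to_vectors) auto
  then show ?thesis by (simp add: Perp_eq rank_sub_def)
qed

lemma Perp_UNIV:
  assumes "span (range \<Phi>) = UNIV"
  shows "Perp \<Phi> UNIV = {0}"
proof -
  have "y = 0" if "y \<in> Perp \<Phi> UNIV" for y
  proof -
    have "orthogonal y y" using that assms by (simp add: Perp_eq)
    then show ?thesis by (simp add: orthogonal_def)
  qed
  moreover have "0 \<in> Perp \<Phi> UNIV" by (simp add: Perp_def)
  ultimately show ?thesis by blast
qed

lemma key:
  "intensity_map \<Phi> y = intensity_map \<Phi> x \<longleftrightarrow> (\<forall>n. (x - y) \<bullet> \<Phi> n = 0 \<or> (x + y) \<bullet> \<Phi> n = 0)"
proof -
  have "\<bar>a\<bar>\<^sup>2 = \<bar>b\<bar>\<^sup>2 \<longleftrightarrow> (b - a = 0 \<or> b + a = 0)" for a b :: real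
    by (auto simp: power2_eq_iff)
  then show ?thesis
    by (simp add: intensity_map_def fun_eq_iff inner_diff_left inner_add_left)
qed

lemma negligible_small:
  fixes U :: "(real^'m) set"
  assumes "subspace U" "U \<noteq> UNIV"
  shows "negligible U"
proof (rule negligible_lowdim)
  have "dim U \<le> CARD('m)" using dim_subset_UNIV[of U] by simp
  moreover have "dim U \<noteq> CARD('m)"
  proof
    assume "dim U = CARD('m)"
    then have "span U = UNIV" using dim_eq_full[of U] by simp
    then show False using assms span_eq_iff by blast
  qed
  ultimately show "dim U < DIM(real^'m)" by simp
qed

lemma h1: fixes x u :: "real^'m" assumes a: "x + u = -x" shows "x = -(1/2) *\<^sub>R u"
proof -
  have c: "x$i + u$i = -(x$i)" for i
    using arg_cong[OF a, of "\<lambda>z. z$i"] by (simp only: vector_add_component vector_uminus_component)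
  have "x$i = (-(1/2) *\<^sub>R u)$i" for i
    using c[of i] by simp
  then show ?thesis by (simp only: vec_eq_iff) blast
qed
lemma h2: fixes x u v :: "real^'m" shows "x = u + v \<Longrightarrow> x - (v - u) = 2 *\<^sub>R u"
  by (simp add: scaleR_2)
lemma h3: fixes x u v :: "real^'m" shows "x = u + v \<Longrightarrow> x + (v - u) = 2 *\<^sub>R v"
  by (simp add: scaleR_2)
lemma h4: fixes x y :: "real^'m" shows "x = (1/2) *\<^sub>R (x - y) + (1/2) *\<^sub>R (x + y)"
  by (simp add: vec_eq_iff field_simps)
lemma h5: fixes x y :: "real^'m" shows "x + y = 0 \<Longrightarrow> y = -x"
  by (simp add: add_eq_0_iff)

lemma bad_cases:
  assumes "{y. intensity_map \<Phi> y = intensity_map \<Phi> x} \<noteq> {x, -x}"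
  shows "\<exists>y. intensity_map \<Phi> y = intensity_map \<Phi> x \<and> y \<noteq> x \<and> y \<noteq> -x"
proof -
  have "intensity_map \<Phi> (-x) = intensity_map \<Phi> x" by (simp add: intensity_map_def)
  then show ?thesis using assms by blast
qed

theorem theorem12:
  fixes \<Phi> :: "'n::finite \<Rightarrow> real ^ 'm"
  assumes "\<forall>n. \<Phi> n \<noteq> 0"
  shows "almost_injective \<Phi> \<longleftrightarrow>
    (span (range \<Phi>) = UNIV \<and>
     (\<forall>S. S \<noteq> {} \<and> S \<noteq> UNIV \<longrightarrow> rank_sub \<Phi> S + rank_sub \<Phi> (- S) > CARD('m)))"
proof
  assume AI: "almost_injective \<Phi>"
  have "\<exists>N\<in>null_sets lebesgue. {x\<in>space lebesgue. \<not> ({y. intensity_map \<Phi> y = intensity_map \<Phi> x} = {x, -x})} \<subseteq> N"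
    using AI unfolding almost_injective_def eventually_ae_filter .
  then obtain N where N: "N \<in> null_sets lebesgue"
    and sub: "{x\<in>space lebesgue. \<not> ({y. intensity_map \<Phi> y = intensity_map \<Phi> x} = {x, -x})} \<subseteq> N"
    by blast
  have NN: "\<And>x. {y. intensity_map \<Phi> y = intensity_map \<Phi> x} \<noteq> {x, -x} \<Longrightarrow> x \<in> N"
    using sub by auto
  have negN: "negligible N" using N by (simp add: negligible_iff_null_sets)
  have sp: "span (range \<Phi>) = UNIV"
  proof (rule ccontr)
    assume ns: "span (range \<Phi>) \<noteq> UNIV"
    have "dim (span (range \<Phi>)) \<noteq> CARD('m)"
      using ns dim_eq_full[of "range \<Phi>"] by simp
    moreover have "dim (Perp \<Phi> UNIV) + dim (span (range \<Phi>)) = CARD('m)"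
      using dim_Perp[of \<Phi> UNIV] by (simp add: rank_sub_def)
    ultimately have "dim (Perp \<Phi> UNIV) \<noteq> 0" by linarith
    then have "\<not> Perp \<Phi> UNIV \<subseteq> {0}" by simp
    then obtain u where u: "u \<in> Perp \<Phi> UNIV" "u \<noteq> 0" by blast
    have "x \<in> N \<union> {- (1/2) *\<^sub>R u}" for x
    proof (cases "x = - (1/2) *\<^sub>R u")
      case False
      have "intensity_map \<Phi> (x + u) = intensity_map \<Phi> x"
        unfolding key using u(1) by (simp add: Perp_def inner_commute)
      moreover have "x + u \<noteq> x" using u by simp
      moreover have "x + u \<noteq> -x"
      proof
        assume "x + u = -x"
        then have "x = -(1/2) *\<^sub>R u" by (rule h1)
        then show False using False by simp
      qed
      ultimately have "{y. intensity_map \<Phi> y = intensity_map \<Phi> x} \<noteq> {x, -x}" by blast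
      then show ?thesis using NN by blast
    qed simp
    then have "UNIV \<subseteq> N \<union> {- (1/2) *\<^sub>R u}" by blast
    moreover have "negligible (N \<union> {- (1/2) *\<^sub>R u})" using negN by simp
    ultimately show False using negligible_subset non_negligible_UNIV by blast
  qed
  have P0: "Perp \<Phi> UNIV = {0}" using Perp_UNIV[OF sp] .
  show "span (range \<Phi>) = UNIV \<and>
     (\<forall>S. S \<noteq> {} \<and> S \<noteq> UNIV \<longrightarrow> rank_sub \<Phi> S + rank_sub \<Phi> (- S) > CARD('m))"
  proof (intro conjI sp allI impI, rule ccontr)
    fix S :: "'n set"
    assume S: "S \<noteq> {} \<and> S \<noteq> UNIV" and le: "\<not> rank_sub \<Phi> S + rank_sub \<Phi> (- S) > CARD('m)"
    define U where "U = Perp \<Phi> S"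
    define V where "V = Perp \<Phi> (- S)"
    have sU: "subspace U" "subspace V" unfolding U_def V_def by (auto intro: subspace_Perp)
    have IUV: "U \<inter> V = {0}"
    proof -
      have "U \<inter> V \<subseteq> Perp \<Phi> UNIV" unfolding U_def V_def Perp_def by auto
      moreover have "0 \<in> U \<inter> V" unfolding U_def V_def Perp_def by auto
      ultimately show ?thesis using P0 by blast
    qed
    have dU: "dim U + rank_sub \<Phi> S = CARD('m)" "dim V + rank_sub \<Phi> (-S) = CARD('m)"
      unfolding U_def V_def by (rule dim_Perp)+
    have dS: "dim {x + y |x y. x \<in> U \<and> y \<in> V} + dim (U \<inter> V) = dim U + dim V"
      by (rule dim_sums_Int[OF sU])
    have "dim (U \<inter> V) = 0" using IUV by simp
    then have "dim {x + y |x y. x \<in> U \<and> y \<in> V} \<ge> CARD('m)" using dS dU le by linarith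
    moreover have "dim {x + y |x y. x \<in> U \<and> y \<in> V} \<le> CARD('m)"
      using dim_subset_UNIV[of "{x + y |x y. x \<in> U \<and> y \<in> V}"] by simp
    ultimately have "dim {x + y |x y. x \<in> U \<and> y \<in> V} = CARD('m)" by linarith
    then have "span {x + y |x y. x \<in> U \<and> y \<in> V} = UNIV"
      using dim_eq_full[of "{x + y |x y. x \<in> U \<and> y \<in> V}"] by simp
    moreover have "span {x + y |x y. x \<in> U \<and> y \<in> V} = {x + y |x y. x \<in> U \<and> y \<in> V}"
      using subspace_sums[OF sU] by (simp only: span_eq_iff)
    ultimately have sum: "{x + y |x y. x \<in> U \<and> y \<in> V} = UNIV" by simp
    obtain n1 where n1: "n1 \<in> S" using S by blast
    obtain n2 where n2: "n2 \<notin> S" using S by blast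
    have "\<Phi> n1 \<notin> U"
    proof
      assume "\<Phi> n1 \<in> U"
      then have "\<Phi> n1 \<bullet> \<Phi> n1 = 0" using n1 by (simp add: U_def Perp_def)
      then show False using assms by simp
    qed
    then have nU: "negligible U" using negligible_small[OF sU(1)] by blast
    have "\<Phi> n2 \<notin> V"
    proof
      assume "\<Phi> n2 \<in> V"
      then have "\<Phi> n2 \<bullet> \<Phi> n2 = 0" using n2 by (simp add: V_def Perp_def)
      then show False using assms by simp
    qed
    then have nV: "negligible V" using negligible_small[OF sU(2)] by blast
    have "x \<in> N \<union> U \<union> V" for x
    proof -
      obtain u v where uv: "x = u + v" "u \<in> U" "v \<in> V" using sum by blast
      show ?thesis
      proof (cases "u \<in> V \<or> v \<in> U")
        case True
        then show ?thesis using uv sU subspace_add subspace_diff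
          by (metis UnI2 add_diff_cancel_left' add_diff_cancel_right' sup_commute)
      next
        case False
        then have u0: "u \<noteq> 0" and v0: "v \<noteq> 0" using sU subspace_0 by blast+
        have "intensity_map \<Phi> (v - u) = intensity_map \<Phi> x"
          unfolding key
        proof
          fix n
          have "x - (v - u) = 2 *\<^sub>R u" "x + (v - u) = 2 *\<^sub>R v" using h2[OF uv(1)] h3[OF uv(1)] by auto
          then show "(x - (v - u)) \<bullet> \<Phi> n = 0 \<or> (x + (v - u)) \<bullet> \<Phi> n = 0"
            using uv(2,3) unfolding U_def V_def Perp_def
            by (cases "n \<in> S") (auto simp: inner_commute)
        qed
        moreover have "v - u \<noteq> x"
        proof
          assume "v - u = x"
          then have "2 *\<^sub>R u = 0" using h2[OF uv(1)] by simp
          then show False using u0 by simp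
        qed
        moreover have "v - u \<noteq> -x"
        proof
          assume "v - u = -x"
          then have "2 *\<^sub>R v = 0" using h3[OF uv(1)] by simp
          then show False using v0 by simp
        qed
        ultimately have "{y. intensity_map \<Phi> y = intensity_map \<Phi> x} \<noteq> {x, -x}" by blast
        then show ?thesis using NN by blast
      qed
    qed
    then have "UNIV \<subseteq> N \<union> U \<union> V" by blast
    moreover have "negligible (N \<union> U \<union> V)" using negN nU nV by simp
    ultimately show False using negligible_subset non_negligible_UNIV by blast
  qed
next
  assume R: "span (range \<Phi>) = UNIV \<and>
     (\<forall>S. S \<noteq> {} \<and> S \<noteq> UNIV \<longrightarrow> rank_sub \<Phi> S + rank_sub \<Phi> (- S) > CARD('m))"
  then have sp: "span (range \<Phi>) = UNIV" by blast
  have P0: "Perp \<Phi> UNIV = {0}" using Perp_UNIV[OF sp] .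
  define W where "W S = {x + y |x y. x \<in> Perp \<Phi> S \<and> y \<in> Perp \<Phi> (-S)}" for S
  define D where "D = \<Union> (W ` {S. S \<noteq> {} \<and> S \<noteq> UNIV})"
  have negW: "negligible (W S)" if S: "S \<noteq> {} \<and> S \<noteq> UNIV" for S
  proof (rule negligible_lowdim)
    have "dim (W S) + dim (Perp \<Phi> S \<inter> Perp \<Phi> (-S)) = dim (Perp \<Phi> S) + dim (Perp \<Phi> (-S))"
      unfolding W_def by (rule dim_sums_Int[OF subspace_Perp subspace_Perp])
    moreover have "dim (Perp \<Phi> S) + rank_sub \<Phi> S = CARD('m)"
      "dim (Perp \<Phi> (-S)) + rank_sub \<Phi> (-S) = CARD('m)" by (rule dim_Perp)+
    moreover have "rank_sub \<Phi> S + rank_sub \<Phi> (- S) > CARD('m)" using R S by blast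
    ultimately show "dim (W S) < DIM(real^'m)" by simp
  qed
  have "negligible D" unfolding D_def
    by (rule negligible_Union) (auto intro: negW)
  then have Dn: "D \<in> null_sets lebesgue" by (simp add: negligible_iff_null_sets)
  show "almost_injective \<Phi>"
    unfolding almost_injective_def
  proof (rule AE_I'[OF Dn], rule subsetI)
    fix x
    assume "x \<in> {x \<in> space lebesgue. \<not> ({y. intensity_map \<Phi> y = intensity_map \<Phi> x} = {x, -x})}"
    then have "{y. intensity_map \<Phi> y = intensity_map \<Phi> x} \<noteq> {x, -x}" by blast
    then obtain y where y: "intensity_map \<Phi> y = intensity_map \<Phi> x" "y \<noteq> x" "y \<noteq> -x"
      using bad_cases by blast
    define S where "S = {n. (x - y) \<bullet> \<Phi> n = 0}"
    have y2: "\<forall>n. (x - y) \<bullet> \<Phi> n = 0 \<or> (x + y) \<bullet> \<Phi> n = 0" by (rule key[THEN iffD1, OF y(1)])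
    have u: "x - y \<in> Perp \<Phi> S" unfolding S_def Perp_def by (simp add: inner_commute)
    have v: "x + y \<in> Perp \<Phi> (-S)" using y2 unfolding S_def Perp_def by (auto simp: inner_commute)
    have "S \<noteq> {}"
    proof
      assume "S = {}"
      then have "x + y \<in> Perp \<Phi> UNIV" using v by simp
      then have "x + y = 0" using P0 by simp
      then show False using y(3) h5 by blast
    qed
    moreover have "S \<noteq> UNIV"
    proof
      assume "S = UNIV"
      then have "x - y = 0" using u P0 by simp
      then show False using y(2) by simp
    qed
    moreover have "x \<in> W S"
    proof -
      have "(1/2) *\<^sub>R (x - y) \<in> Perp \<Phi> S" using u subspace_Perp subspace_scale by blast
      moreover have "(1/2) *\<^sub>R (x + y) \<in> Perp \<Phi> (-S)" using v subspace_Perp subspace_scale by blast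
      moreover have "x = (1/2) *\<^sub>R (x - y) + (1/2) *\<^sub>R (x + y)"
        by (rule h4)
      ultimately show ?thesis unfolding W_def by blast
    qed
    ultimately show "x \<in> D" unfolding D_def by blast
  qed
qed

end
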